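(* Let $(E,\mu)$, $(F,\nu)$, $(H,\omega)$ be fuzzy Riesz spaces with $F$ fuzzy Dedekind complete, let $Q:E\rightarrow H$ be a fuzzy lattice homomorphism and $S:H\rightarrow F$ a fuzzy positive linear operator. Then every fuzzy positive linear operator $T:E\rightarrow F$ with $T\le S\circ Q$ admits a factorization $T=S_1\circ Q$, where $S_1:H\rightarrow F$ is linear and $0\le S_1\le S$.
   Context: A fuzzy order on a real vector space $E$ is a map $\mu:E\times E\to[0,1]$ with $\mu(x,x)=1$; $\mu(x,y)+\mu(y,x)>1$ implies $x=y$; and $\mu(x,z)\ge\sup_{y}\min(\mu(x,y),\mu(y,z))$. Write $x\le y$ for $\mu(x,y)>\frac12$; upper bounds, suprema and infima are taken with respect to this relation. $(E,\mu)$ is a fuzzy ordered linear space if $\mu(x_1,x_2)>\frac12$ implies $\mu(x_1,x_2)\le\mu(x_1+x,x_2+x)$ for all $x$ and $\mu(x_1,x_2)\le\mu(\alpha x_1,\alpha x_2)$ for all $\alpha>0$; it is a fuzzy Riesz space if $x\vee y=\sup\{x,y\}$, $x\wedge y=\inf\{x,y\}$ exist for all $x,y$; fuzzy Dedekind complete if every nonempty subset bounded above has a supremum. A linear operator $R$ is fuzzy positive ($0\le R$) if $0\le x$ implies $0\le Rx$; for linear operators $R_1,R_2$ between the same spaces, $R_1\le R_2$ means $R_2-R_1$ is fuzzy positive. A fuzzy lattice homomorphism is a linear map with $Q(x\vee y)=Qx\vee Qy$. *)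

theory Defs
  imports Main "HOL.Real_Vector_Spaces"
begin

definition fuzzy_order :: "('a \<Rightarrow> 'a \<Rightarrow> real) \<Rightarrow> bool" where
  "fuzzy_order \<mu> \<longleftrightarrow>
     (\<forall>x y. 0 \<le> \<mu> x y \<and> \<mu> x y \<le> 1) \<and>
     (\<forall>x. \<mu> x x = 1) \<and>
     (\<forall>x y. \<mu> x y + \<mu> y x > 1 \<longrightarrow> x = y) \<and>
     (\<forall>x z. \<mu> x z \<ge> (SUP y. min (\<mu> x y) (\<mu> y z)))"

definition fle :: "('a \<Rightarrow> 'a \<Rightarrow> real) \<Rightarrow> 'a \<Rightarrow> 'a \<Rightarrow> bool" where
  "fle \<mu> x y \<longleftrightarrow> \<mu> x y > 1/2"

definition is_fsup :: "('a \<Rightarrow> 'a \<Rightarrow> real) \<Rightarrow> 'a set \<Rightarrow> 'a \<Rightarrow> bool" where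
  "is_fsup \<mu> A s \<longleftrightarrow> (\<forall>a\<in>A. fle \<mu> a s) \<and> (\<forall>u. (\<forall>a\<in>A. fle \<mu> a u) \<longrightarrow> fle \<mu> s u)"

definition is_finf :: "('a \<Rightarrow> 'a \<Rightarrow> real) \<Rightarrow> 'a set \<Rightarrow> 'a \<Rightarrow> bool" where
  "is_finf \<mu> A s \<longleftrightarrow> (\<forall>a\<in>A. fle \<mu> s a) \<and> (\<forall>u. (\<forall>a\<in>A. fle \<mu> u a) \<longrightarrow> fle \<mu> u s)"

definition fjoin :: "('a \<Rightarrow> 'a \<Rightarrow> real) \<Rightarrow> 'a \<Rightarrow> 'a \<Rightarrow> 'a" where
  "fjoin \<mu> x y = (THE s. is_fsup \<mu> {x, y} s)"

definition fuzzy_ordered_linear_space :: "('a::real_vector \<Rightarrow> 'a \<Rightarrow> real) \<Rightarrow> bool" where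
  "fuzzy_ordered_linear_space \<mu> \<longleftrightarrow> fuzzy_order \<mu> \<and>
     (\<forall>x1 x2. \<mu> x1 x2 > 1/2 \<longrightarrow>
        (\<forall>x. \<mu> x1 x2 \<le> \<mu> (x1 + x) (x2 + x)) \<and>
        (\<forall>\<alpha>::real. \<alpha> > 0 \<longrightarrow> \<mu> x1 x2 \<le> \<mu> (\<alpha> *\<^sub>R x1) (\<alpha> *\<^sub>R x2)))"

definition fuzzy_riesz_space :: "('a::real_vector \<Rightarrow> 'a \<Rightarrow> real) \<Rightarrow> bool" where
  "fuzzy_riesz_space \<mu> \<longleftrightarrow> fuzzy_ordered_linear_space \<mu> \<and>
     (\<forall>x y. (\<exists>s. is_fsup \<mu> {x, y} s) \<and> (\<exists>i. is_finf \<mu> {x, y} i))"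

definition fuzzy_dedekind_complete :: "('a \<Rightarrow> 'a \<Rightarrow> real) \<Rightarrow> bool" where
  "fuzzy_dedekind_complete \<mu> \<longleftrightarrow>
     (\<forall>A. A \<noteq> {} \<and> (\<exists>u. \<forall>a\<in>A. fle \<mu> a u) \<longrightarrow> (\<exists>s. is_fsup \<mu> A s))"

definition fuzzy_positive ::
  "('a::real_vector \<Rightarrow> 'a \<Rightarrow> real) \<Rightarrow> ('b::real_vector \<Rightarrow> 'b \<Rightarrow> real) \<Rightarrow> ('a \<Rightarrow> 'b) \<Rightarrow> bool" where
  "fuzzy_positive \<mu> \<nu> R \<longleftrightarrow> (\<forall>x. fle \<mu> 0 x \<longrightarrow> fle \<nu> 0 (R x))"

definition op_fle ::
  "('a::real_vector \<Rightarrow> 'a \<Rightarrow> real) \<Rightarrow> ('b::real_vector \<Rightarrow> 'b \<Rightarrow> real) \<Rightarrow> ('a \<Rightarrow> 'b) \<Rightarrow> ('a \<Rightarrow> 'b) \<Rightarrow> bool" where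
  "op_fle \<mu> \<nu> R1 R2 \<longleftrightarrow> fuzzy_positive \<mu> \<nu> (\<lambda>x. R2 x - R1 x)"

definition fuzzy_lattice_hom ::
  "('a::real_vector \<Rightarrow> 'a \<Rightarrow> real) \<Rightarrow> ('b::real_vector \<Rightarrow> 'b \<Rightarrow> real) \<Rightarrow> ('a \<Rightarrow> 'b) \<Rightarrow> bool" where
  "fuzzy_lattice_hom \<mu> \<nu> Q \<longleftrightarrow> linear Q \<and> (\<forall>x y. Q (fjoin \<mu> x y) = fjoin \<nu> (Q x) (Q y))"

end

theory Submission
  imports Defs
begin

locale ovs =
  fixes le :: "'a::real_vector \<Rightarrow> 'a \<Rightarrow> bool"
  assumes refl: "le x x"
    and antisym: "le x y \<Longrightarrow> le y x \<Longrightarrow> x = y"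
    and trans: "le x y \<Longrightarrow> le y z \<Longrightarrow> le x z"
    and addr: "le x y \<Longrightarrow> le (x + z) (y + z)"
    and scale: "le x y \<Longrightarrow> 0 < c \<Longrightarrow> le (c *\<^sub>R x) (c *\<^sub>R y)"
begin

lemma diff: "le x y \<longleftrightarrow> le 0 (y - x)"
proof
  assume "le x y" then show "le 0 (y - x)" using addr[of x y "-x"] by simp
next
  assume "le 0 (y - x)" then show "le x y" using addr[of 0 "y - x" x] by simp
qed

lemma pos_add: "le 0 a \<Longrightarrow> le 0 b \<Longrightarrow> le 0 (a + b)"
  using addr[of 0 a b] trans by fastforce

lemma pos_scale: "le 0 a \<Longrightarrow> 0 \<le> c \<Longrightarrow> le 0 (c *\<^sub>R a)"
  by (cases "c = 0") (auto simp: refl dest: scale[of 0 a c])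

lemma add_mono: "le a b \<Longrightarrow> le c d \<Longrightarrow> le (a + c) (b + d)"
  using pos_add[of "b - a" "d - c"] by (simp add: diff[of a b] diff[of c d] diff[of "a+c"] algebra_simps)

lemma neg_pos: "le a 0 \<longleftrightarrow> le 0 (- a)"
  using diff[of a 0] by simp

end

lemma fuzzy_ovs:
  assumes "fuzzy_ordered_linear_space \<mu>"
  shows "ovs (fle \<mu>)"
proof -
  have fo: "fuzzy_order \<mu>" using assms by (simp add: fuzzy_ordered_linear_space_def)
  show ?thesis
  proof
    fix x show "fle \<mu> x x" using fo by (simp add: fuzzy_order_def fle_def)
  next
    fix x y assume "fle \<mu> x y" "fle \<mu> y x" then show "x = y"
      using fo by (auto simp: fuzzy_order_def fle_def)
  next
    fix x y z assume a: "fle \<mu> x y" "fle \<mu> y z"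
    have b: "bdd_above (range (\<lambda>y. min (\<mu> x y) (\<mu> y z)))"
      using fo by (intro bdd_aboveI[of _ 1]) (auto simp: fuzzy_order_def min_le_iff_disj)
    have "min (\<mu> x y) (\<mu> y z) \<le> (SUP y. min (\<mu> x y) (\<mu> y z))"
      by (rule cSUP_upper[OF _ b]) simp
    also have "\<dots> \<le> \<mu> x z" using fo by (simp add: fuzzy_order_def)
    finally show "fle \<mu> x z" using a by (simp add: fle_def)
  next
    fix x y z assume h: "fle \<mu> x y"
    then have "\<mu> x y \<le> \<mu> (x + z) (y + z)"
      using assms unfolding fuzzy_ordered_linear_space_def fle_def by blast
    then show "fle \<mu> (x + z) (y + z)" using h by (simp add: fle_def)
  next
    fix x y and c :: real assume h: "fle \<mu> x y" "0 < c"
    then have "\<mu> x y \<le> \<mu> (c *\<^sub>R x) (c *\<^sub>R y)"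
      using assms unfolding fuzzy_ordered_linear_space_def fle_def by blast
    then show "fle \<mu> (c *\<^sub>R x) (c *\<^sub>R y)" using h by (simp add: fle_def)
  qed
qed

lemma fsup_unique:
  assumes "ovs (fle \<mu>)" "is_fsup \<mu> A s" "is_fsup \<mu> A t" shows "s = t"
  using assms ovs.antisym[OF assms(1)] unfolding is_fsup_def by blast

lemma fjoin_sup:
  assumes "ovs (fle \<mu>)" "\<exists>s. is_fsup \<mu> {x, y} s"
  shows "is_fsup \<mu> {x, y} (fjoin \<mu> x y)"
proof -
  obtain s where s: "is_fsup \<mu> {x, y} s" using assms by blast
  have "is_fsup \<mu> {x, y} (THE s. is_fsup \<mu> {x, y} s)"
    by (rule theI[of _ s]) (use s fsup_unique[OF assms(1)] in blast)+
  then show ?thesis by (simp add: fjoin_def)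
qed

lemma fjoin_eq:
  assumes "ovs (fle \<mu>)" "is_fsup \<mu> {x, y} s"
  shows "fjoin \<mu> x y = s"
  using fjoin_sup[OF assms(1)] assms fsup_unique by blast


definition ext_set :: "('h::real_vector \<Rightarrow> 'f::real_vector) \<Rightarrow> ('f \<Rightarrow> 'f \<Rightarrow> real) \<Rightarrow> ('h \<times> 'f) set set" where
  "ext_set p \<nu> = {\<Gamma>. (\<forall>x a b. (x,a)\<in>\<Gamma> \<longrightarrow> (x,b)\<in>\<Gamma> \<longrightarrow> a = b) \<and> (0,0)\<in>\<Gamma> \<and>
     (\<forall>x a y b. (x,a)\<in>\<Gamma> \<longrightarrow> (y,b)\<in>\<Gamma> \<longrightarrow> (x+y,a+b)\<in>\<Gamma>) \<and>
     (\<forall>x a c. (x,a)\<in>\<Gamma> \<longrightarrow> (c *\<^sub>R x, c *\<^sub>R a)\<in>\<Gamma>) \<and>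
     (\<forall>x a. (x,a)\<in>\<Gamma> \<longrightarrow> fle \<nu> a (p x))}"

lemma ext_step:
  fixes p :: "'h::real_vector \<Rightarrow> 'f::real_vector"
  assumes ov: "ovs (fle \<nu>)" and dc: "fuzzy_dedekind_complete \<nu>"
    and sub: "\<And>x y. fle \<nu> (p (x+y)) (p x + p y)"
    and hom: "\<And>c x. 0 < c \<Longrightarrow> p (c *\<^sub>R x) = c *\<^sub>R p x"
    and G: "\<Gamma> \<in> ext_set p \<nu>" and h0: "\<And>a. (h0, a) \<notin> \<Gamma>"
  shows "\<exists>\<Gamma>'\<in>ext_set p \<nu>. \<Gamma> \<subseteq> \<Gamma>' \<and> \<Gamma>' \<noteq> \<Gamma>"
proof -
  have gr: "\<And>x a b. (x,a)\<in>\<Gamma> \<Longrightarrow> (x,b)\<in>\<Gamma> \<Longrightarrow> a = b"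
   and z: "(0,0)\<in>\<Gamma>"
   and ad: "\<And>x a y b. (x,a)\<in>\<Gamma> \<Longrightarrow> (y,b)\<in>\<Gamma> \<Longrightarrow> (x+y,a+b)\<in>\<Gamma>"
   and sc: "\<And>x a c. (x,a)\<in>\<Gamma> \<Longrightarrow> (c *\<^sub>R x, c *\<^sub>R a)\<in>\<Gamma>"
   and dm: "\<And>x a. (x,a)\<in>\<Gamma> \<Longrightarrow> fle \<nu> a (p x)"
    using G unfolding ext_set_def by blast+
  have key: "fle \<nu> (g1 - p (m1 - h0)) (p (m2 + h0) - g2)"
    if "(m1,g1)\<in>\<Gamma>" "(m2,g2)\<in>\<Gamma>" for m1 g1 m2 g2
  proof -
    have "fle \<nu> (g1 + g2) (p (m1 + m2))" using dm[OF ad[OF that]] .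
    moreover have "fle \<nu> (p (m1 + m2)) (p (m1 - h0) + p (m2 + h0))"
      using sub[of "m1 - h0" "m2 + h0"] by simp
    ultimately have "fle \<nu> (g1 + g2) (p (m1 - h0) + p (m2 + h0))" by (rule ovs.trans[OF ov])
    then show ?thesis
      using ovs.diff[OF ov, of "g1 + g2"] ovs.diff[OF ov, of "g1 - p (m1 - h0)"]
      by (simp add: algebra_simps)
  qed
  define B where "B = {y. \<exists>m g. (m,g)\<in>\<Gamma> \<and> y = g - p (m - h0)}"
  have "B \<noteq> {}" using z unfolding B_def by blast
  moreover have "\<forall>b\<in>B. fle \<nu> b (p (0 + h0) - 0)" using key[OF _ z] unfolding B_def by blast
  ultimately obtain c where c: "is_fsup \<nu> B c"
    using dc unfolding fuzzy_dedekind_complete_def by blast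
  have lo: "fle \<nu> (g - p (m - h0)) c" if "(m,g)\<in>\<Gamma>" for m g
    using c that unfolding is_fsup_def B_def by blast
  have up: "fle \<nu> c (p (m + h0) - g)" if "(m,g)\<in>\<Gamma>" for m g
  proof -
    have "\<forall>b\<in>B. fle \<nu> b (p (m + h0) - g)" using key[OF _ that] unfolding B_def by blast
    then show ?thesis using c unfolding is_fsup_def by blast
  qed
  define \<Gamma>' where "\<Gamma>' = {(m + t *\<^sub>R h0, g + t *\<^sub>R c) | m g t. (m,g) \<in> \<Gamma>}"
  have "\<Gamma>' \<in> ext_set p \<nu>"
    unfolding ext_set_def
  proof (intro CollectI conjI allI impI)
    fix x a b assume "(x,a)\<in>\<Gamma>'" "(x,b)\<in>\<Gamma>'"
    then obtain m1 g1 t1 m2 g2 t2 where e: "(m1,g1)\<in>\<Gamma>" "(m2,g2)\<in>\<Gamma>"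
      "x = m1 + t1 *\<^sub>R h0" "a = g1 + t1 *\<^sub>R c" "x = m2 + t2 *\<^sub>R h0" "b = g2 + t2 *\<^sub>R c"
      unfolding \<Gamma>'_def by blast
    have "t1 = t2"
    proof (rule ccontr)
      assume ne: "t1 \<noteq> t2"
      have "(m2 + (-1) *\<^sub>R m1, g2 + (-1) *\<^sub>R g1) \<in> \<Gamma>" using ad[OF e(2) sc[OF e(1)]] .
      from sc[OF this, of "1/(t1 - t2)"]
      have "((1/(t1 - t2)) *\<^sub>R (m2 - m1), (1/(t1 - t2)) *\<^sub>R (g2 - g1)) \<in> \<Gamma>" by simp
      moreover have "m2 - m1 = (t1 - t2) *\<^sub>R h0" using e(3,5) by (simp add: algebra_simps)
      ultimately show False using ne h0 by simp
    qed
    then have "m1 = m2" using e by simp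
    then show "a = b" using gr e \<open>t1 = t2\<close> by blast
  next
    show "(0,0)\<in>\<Gamma>'" unfolding \<Gamma>'_def using z by force
  next
    fix x a y b assume "(x,a)\<in>\<Gamma>'" "(y,b)\<in>\<Gamma>'"
    then obtain m1 g1 t1 m2 g2 t2 where e: "(m1,g1)\<in>\<Gamma>" "(m2,g2)\<in>\<Gamma>"
      "x = m1 + t1 *\<^sub>R h0" "a = g1 + t1 *\<^sub>R c" "y = m2 + t2 *\<^sub>R h0" "b = g2 + t2 *\<^sub>R c"
      unfolding \<Gamma>'_def by blast
    have "x + y = (m1 + m2) + (t1 + t2) *\<^sub>R h0" "a + b = (g1 + g2) + (t1 + t2) *\<^sub>R c"
      using e by (simp_all add: algebra_simps)
    then show "(x+y,a+b)\<in>\<Gamma>'" unfolding \<Gamma>'_def using ad[OF e(1,2)] by blast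
  next
    fix x a and r :: real assume "(x,a)\<in>\<Gamma>'"
    then obtain m g t where e: "(m,g)\<in>\<Gamma>" "x = m + t *\<^sub>R h0" "a = g + t *\<^sub>R c"
      unfolding \<Gamma>'_def by blast
    have "r *\<^sub>R x = r *\<^sub>R m + (r * t) *\<^sub>R h0" "r *\<^sub>R a = r *\<^sub>R g + (r * t) *\<^sub>R c"
      using e by (simp_all add: algebra_simps)
    then show "(r *\<^sub>R x, r *\<^sub>R a)\<in>\<Gamma>'" unfolding \<Gamma>'_def using sc[OF e(1)] by blast
  next
    fix x a assume "(x,a)\<in>\<Gamma>'"
    then obtain m g t where e: "(m,g)\<in>\<Gamma>" "x = m + t *\<^sub>R h0" "a = g + t *\<^sub>R c"
      unfolding \<Gamma>'_def by blast
    consider "t = 0" | "t > 0" | "t < 0" by linarith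
    then show "fle \<nu> a (p x)"
    proof cases
      case 1 then show ?thesis using e dm by simp
    next
      case 2
      have m': "((1/t) *\<^sub>R m, (1/t) *\<^sub>R g) \<in> \<Gamma>" using sc[OF e(1)] .
      have "fle \<nu> (t *\<^sub>R c) (t *\<^sub>R (p ((1/t) *\<^sub>R m + h0) - (1/t) *\<^sub>R g))"
        using ovs.scale[OF ov up[OF m'] 2] .
      moreover have "t *\<^sub>R p ((1/t) *\<^sub>R m + h0) = p x"
        using hom[OF 2, of "(1/t) *\<^sub>R m + h0"] 2 e by (simp add: scaleR_add_right)
      ultimately have "fle \<nu> (t *\<^sub>R c) (p x - g)" using 2 by (simp add: scaleR_diff_right)
      then show ?thesis using ovs.diff[OF ov, of "t *\<^sub>R c"] ovs.diff[OF ov, of a] e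
        by (simp add: algebra_simps)
    next
      case 3
      define s where "s = - t"
      have s: "s > 0" using 3 s_def by simp
      have m': "((1/s) *\<^sub>R m, (1/s) *\<^sub>R g) \<in> \<Gamma>" using sc[OF e(1)] .
      have "fle \<nu> (s *\<^sub>R ((1/s) *\<^sub>R g - p ((1/s) *\<^sub>R m - h0))) (s *\<^sub>R c)"
        using ovs.scale[OF ov lo[OF m'] s] .
      moreover have "s *\<^sub>R p ((1/s) *\<^sub>R m - h0) = p x"
        using hom[OF s, of "(1/s) *\<^sub>R m - h0"] s e s_def by (simp add: scaleR_diff_right)
      ultimately have "fle \<nu> (g - p x) (s *\<^sub>R c)" using s by (simp add: scaleR_diff_right)
      then show ?thesis using ovs.diff[OF ov, of "g - p x"] ovs.diff[OF ov, of a] e s_def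
        by (simp add: algebra_simps)
    qed
  qed
  moreover have "\<Gamma> \<subseteq> \<Gamma>'" unfolding \<Gamma>'_def by force
  moreover have "(h0, c) \<in> \<Gamma>'" unfolding \<Gamma>'_def
  proof (intro CollectI exI conjI)
    show "(h0, c) = (0 + 1 *\<^sub>R h0, 0 + 1 *\<^sub>R c)" by simp
  qed (rule z)
  ultimately show ?thesis using h0 by blast
qed


lemma HB:
  fixes p :: "'h::real_vector \<Rightarrow> 'f::real_vector"
  assumes ov: "ovs (fle \<nu>)" and dc: "fuzzy_dedekind_complete \<nu>"
    and sub: "\<And>x y. fle \<nu> (p (x+y)) (p x + p y)"
    and hom: "\<And>c x. 0 < c \<Longrightarrow> p (c *\<^sub>R x) = c *\<^sub>R p x"
    and G0: "\<Gamma>0 \<in> ext_set p \<nu>"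
  shows "\<exists>R. linear R \<and> (\<forall>x. fle \<nu> (R x) (p x)) \<and> (\<forall>x a. (x,a)\<in>\<Gamma>0 \<longrightarrow> R x = a)"
proof -
  define A where "A = {\<Gamma> \<in> ext_set p \<nu>. \<Gamma>0 \<subseteq> \<Gamma>}"
  have "\<forall>C\<in>chains A. \<exists>U\<in>A. \<forall>X\<in>C. X \<subseteq> U"
  proof
    fix C assume C: "C \<in> chains A"
    show "\<exists>U\<in>A. \<forall>X\<in>C. X \<subseteq> U"
    proof (cases "C = {}")
      case True then show ?thesis using G0 unfolding A_def by blast
    next
      case False
      have CA: "C \<subseteq> A" and ch: "\<And>X Y. X \<in> C \<Longrightarrow> Y \<in> C \<Longrightarrow> X \<subseteq> Y \<or> Y \<subseteq> X"
        using C unfolding chains_def chain_subset_def by blast+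
      have mem: "\<And>X. X \<in> C \<Longrightarrow> X \<in> ext_set p \<nu> \<and> \<Gamma>0 \<subseteq> X" using CA unfolding A_def by blast
      have "\<Union>C \<in> ext_set p \<nu>"
        unfolding ext_set_def
      proof (intro CollectI conjI allI impI)
        fix x a b assume "(x,a)\<in>\<Union>C" "(x,b)\<in>\<Union>C"
        then obtain X Y where XY: "X\<in>C" "Y\<in>C" "(x,a)\<in>X" "(x,b)\<in>Y" by blast
        show "a = b"
        proof (cases "X \<subseteq> Y")
          case True
          then show ?thesis using XY mem[of Y] unfolding ext_set_def by blast
        next
          case False
          then have "Y \<subseteq> X" using ch[OF XY(1,2)] by blast
          then show ?thesis using XY mem[of X] unfolding ext_set_def by blast
        qed
      next
        obtain X where "X \<in> C" using False by blast
        then show "(0,0) \<in> \<Union>C" using mem[of X] unfolding ext_set_def by blast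
      next
        fix x a y b assume "(x,a)\<in>\<Union>C" "(y,b)\<in>\<Union>C"
        then obtain X Y where XY: "X\<in>C" "Y\<in>C" "(x,a)\<in>X" "(y,b)\<in>Y" by blast
        show "(x+y,a+b)\<in>\<Union>C"
        proof (cases "X \<subseteq> Y")
          case True
          then show ?thesis using XY mem[of Y] unfolding ext_set_def by blast
        next
          case False
          then have "Y \<subseteq> X" using ch[OF XY(1,2)] by blast
          then show ?thesis using XY mem[of X] unfolding ext_set_def by blast
        qed
      next
        fix x a and r :: real assume "(x,a)\<in>\<Union>C"
        then show "(r *\<^sub>R x, r *\<^sub>R a)\<in>\<Union>C" using mem unfolding ext_set_def by blast
      next
        fix x a assume "(x,a)\<in>\<Union>C"
        then show "fle \<nu> a (p x)" using mem unfolding ext_set_def by blast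
      qed
      moreover have "\<Gamma>0 \<subseteq> \<Union>C" using False mem by blast
      ultimately show ?thesis unfolding A_def by blast
    qed
  qed
  from Zorn_Lemma2[OF this] obtain M where M: "M \<in> A" and mx: "\<forall>X\<in>A. M \<subseteq> X \<longrightarrow> X = M"
    by blast
  have ME: "M \<in> ext_set p \<nu>" and M0: "\<Gamma>0 \<subseteq> M" using M unfolding A_def by blast+
  have gr: "\<And>x a b. (x,a)\<in>M \<Longrightarrow> (x,b)\<in>M \<Longrightarrow> a = b"
   and ad: "\<And>x a y b. (x,a)\<in>M \<Longrightarrow> (y,b)\<in>M \<Longrightarrow> (x+y,a+b)\<in>M"
   and sc: "\<And>x a c. (x,a)\<in>M \<Longrightarrow> (c *\<^sub>R x, c *\<^sub>R a)\<in>M"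
   and dm: "\<And>x a. (x,a)\<in>M \<Longrightarrow> fle \<nu> a (p x)"
    using ME unfolding ext_set_def by blast+
  have tot: "\<exists>a. (h,a) \<in> M" for h
  proof (rule ccontr)
    assume "\<nexists>a. (h, a) \<in> M"
    then obtain \<Gamma>' where "\<Gamma>' \<in> ext_set p \<nu>" "M \<subseteq> \<Gamma>'" "\<Gamma>' \<noteq> M"
      using ext_step[OF ov dc sub hom ME, of h] by blast
    then show False using mx M0 unfolding A_def by blast
  qed
  define R where "R x = (THE a. (x,a) \<in> M)" for x
  have RM: "(x, R x) \<in> M" for x
    unfolding R_def using tot[of x] gr by (metis theI)
  have Req: "(x,a) \<in> M \<Longrightarrow> R x = a" for x a using RM gr by blast
  have "linear R"
  proof (rule linearI)
    fix x y show "R (x + y) = R x + R y" using Req[OF ad[OF RM RM]] .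
  next
    fix r x show "R (r *\<^sub>R x) = r *\<^sub>R R x" using Req[OF sc[OF RM]] .
  qed
  moreover have "\<forall>x. fle \<nu> (R x) (p x)" using dm[OF RM] by blast
  moreover have "\<forall>x a. (x,a)\<in>\<Gamma>0 \<longrightarrow> R x = a" using Req M0 by blast
  ultimately show ?thesis by blast
qed


theorem theorem5p1:
  fixes \<mu> :: "'e::real_vector \<Rightarrow> 'e \<Rightarrow> real"
    and \<nu> :: "'f::real_vector \<Rightarrow> 'f \<Rightarrow> real"
    and \<omega> :: "'h::real_vector \<Rightarrow> 'h \<Rightarrow> real"
    and Q :: "'e \<Rightarrow> 'h" and S :: "'h \<Rightarrow> 'f" and T :: "'e \<Rightarrow> 'f"
  assumes "fuzzy_riesz_space \<mu>" and "fuzzy_riesz_space \<nu>" and "fuzzy_riesz_space \<omega>"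
    and "fuzzy_dedekind_complete \<nu>"
    and "fuzzy_lattice_hom \<mu> \<omega> Q"
    and "linear S" and "fuzzy_positive \<omega> \<nu> S"
    and "linear T" and "fuzzy_positive \<mu> \<nu> T"
    and "op_fle \<mu> \<nu> T (S \<circ> Q)"
  shows "\<exists>S1 :: 'h \<Rightarrow> 'f. linear S1 \<and> T = S1 \<circ> Q \<and>
           fuzzy_positive \<omega> \<nu> S1 \<and> op_fle \<omega> \<nu> S1 S"
proof -
  note rE = assms(1) and rF = assms(2) and rH = assms(3) and dc = assms(4)
  have ovE: "ovs (fle \<mu>)" using rE fuzzy_ovs unfolding fuzzy_riesz_space_def by blast
  have ovF: "ovs (fle \<nu>)" using rF fuzzy_ovs unfolding fuzzy_riesz_space_def by blast
  have ovH: "ovs (fle \<omega>)" using rH fuzzy_ovs unfolding fuzzy_riesz_space_def by blast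
  have jE: "is_fsup \<mu> {x, 0} (fjoin \<mu> x 0)" for x
    using fjoin_sup[OF ovE] rE unfolding fuzzy_riesz_space_def by blast
  have jH: "is_fsup \<omega> {x, 0} (fjoin \<omega> x 0)" for x
    using fjoin_sup[OF ovH] rH unfolding fuzzy_riesz_space_def by blast
  have linQ: "linear Q" and Qj: "\<And>x y. Q (fjoin \<mu> x y) = fjoin \<omega> (Q x) (Q y)"
    using assms(5) unfolding fuzzy_lattice_hom_def by blast+
  note linS = assms(6) and linT = assms(8)
  have Spos: "\<And>h. fle \<omega> 0 h \<Longrightarrow> fle \<nu> 0 (S h)" using assms(7) unfolding fuzzy_positive_def by blast
  have Tpos: "\<And>x. fle \<mu> 0 x \<Longrightarrow> fle \<nu> 0 (T x)" using assms(9) unfolding fuzzy_positive_def by blast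
  have TSQ: "\<And>x. fle \<mu> 0 x \<Longrightarrow> fle \<nu> 0 (S (Q x) - T x)"
    using assms(10) unfolding op_fle_def fuzzy_positive_def by simp
  have Smono: "fle \<nu> (S a) (S b)" if "fle \<omega> a b" for a b
    using Spos[of "b - a"] that ovs.diff[OF ovH, of a b] ovs.diff[OF ovF, of "S a" "S b"]
    linear_diff[OF linS] by simp
  define p where "p h = S (fjoin \<omega> h 0)" for h
  have sub: "fle \<nu> (p (x+y)) (p x + p y)" for x y
  proof -
    have "fle \<omega> (fjoin \<omega> (x+y) 0) (fjoin \<omega> x 0 + fjoin \<omega> y 0)"
    proof -
      have "fle \<omega> (x + y) (fjoin \<omega> x 0 + fjoin \<omega> y 0)"
        using ovs.add_mono[OF ovH] jH[of x] jH[of y] unfolding is_fsup_def by blast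
      moreover have "fle \<omega> 0 (fjoin \<omega> x 0 + fjoin \<omega> y 0)"
        using ovs.pos_add[OF ovH] jH[of x] jH[of y] unfolding is_fsup_def by blast
      ultimately show ?thesis using jH[of "x+y"] unfolding is_fsup_def by blast
    qed
    from Smono[OF this] show ?thesis unfolding p_def by (simp add: linear_add[OF linS])
  qed
  have hom: "p (c *\<^sub>R x) = c *\<^sub>R p x" if c: "0 < c" for c x
  proof -
    have "is_fsup \<omega> {c *\<^sub>R x, 0} (c *\<^sub>R fjoin \<omega> x 0)"
      unfolding is_fsup_def
    proof (intro conjI allI impI ballI)
      fix a assume "a \<in> {c *\<^sub>R x, 0}"
      then show "fle \<omega> a (c *\<^sub>R fjoin \<omega> x 0)"
      proof -
        have j: "fle \<omega> x (fjoin \<omega> x 0)" "fle \<omega> 0 (fjoin \<omega> x 0)" using jH[of x] unfolding is_fsup_def by simp_all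
        have "fle \<omega> (c *\<^sub>R x) (c *\<^sub>R fjoin \<omega> x 0)" by (rule ovs.scale[OF ovH j(1) c])
        moreover have "fle \<omega> (c *\<^sub>R 0) (c *\<^sub>R fjoin \<omega> x 0)" by (rule ovs.scale[OF ovH j(2) c])
        ultimately show ?thesis using \<open>a \<in> {c *\<^sub>R x, 0}\<close> by auto
      qed
    next
      fix u assume u: "\<forall>a\<in>{c *\<^sub>R x, 0}. fle \<omega> a u"
      have c': "0 < 1/c" using c by simp
      have u1: "fle \<omega> (c *\<^sub>R x) u" "fle \<omega> 0 u" using u by simp_all
      have "fle \<omega> ((1/c) *\<^sub>R (c *\<^sub>R x)) ((1/c) *\<^sub>R u)"
        by (rule ovs.scale[OF ovH u1(1) c'])
      moreover have "fle \<omega> ((1/c) *\<^sub>R 0) ((1/c) *\<^sub>R u)"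
        by (rule ovs.scale[OF ovH u1(2) c'])
      ultimately have "fle \<omega> x ((1/c) *\<^sub>R u)" "fle \<omega> 0 ((1/c) *\<^sub>R u)" using c by simp_all
      then have "fle \<omega> (fjoin \<omega> x 0) ((1/c) *\<^sub>R u)" using jH[of x] unfolding is_fsup_def by blast
      from ovs.scale[OF ovH this c] show "fle \<omega> (c *\<^sub>R fjoin \<omega> x 0) u" using c by simp
    qed
    then have "fjoin \<omega> (c *\<^sub>R x) 0 = c *\<^sub>R fjoin \<omega> x 0" by (rule fjoin_eq[OF ovH])
    then show ?thesis unfolding p_def using linear_scale[OF linS] by simp
  qed
  have j00: "fjoin \<omega> 0 0 = 0"
    by (rule fjoin_eq[OF ovH]) (simp add: is_fsup_def ovs.refl[OF ovH])
  have Qp: "Q (fjoin \<mu> x 0) = fjoin \<omega> (Q x) 0" for x using Qj linear_0[OF linQ] by simp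
  have wd: "T z = 0" if z: "Q z = 0" for z
  proof -
    define zp where "zp = fjoin \<mu> z 0"
    have a: "fle \<mu> 0 zp" "fle \<mu> 0 (zp - z)"
    proof -
      have j: "fle \<mu> z zp" "fle \<mu> 0 zp" using jE[of z] unfolding is_fsup_def zp_def by simp_all
      show "fle \<mu> 0 zp" "fle \<mu> 0 (zp - z)" using j ovs.diff[OF ovE, of z zp] by simp_all
    qed
    have "Q zp = 0" using Qp z j00 unfolding zp_def by simp
    then have "Q (zp - z) = 0" using z linear_diff[OF linQ] by simp
    have zero: "T w = 0" if w: "fle \<mu> 0 w" "Q w = 0" for w
    proof -
      have "fle \<nu> 0 (- T w)" using TSQ[OF w(1)] w(2) linear_0[OF linS] by simp
      then have "fle \<nu> (T w) 0" using ovs.neg_pos[OF ovF, of "T w"] by simp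
      then show ?thesis using Tpos[OF w(1)] ovs.antisym[OF ovF] by blast
    qed
    have "T zp = 0" using zero a(1) \<open>Q zp = 0\<close> by blast
    moreover have "T (zp - z) = 0" using zero a(2) \<open>Q (zp - z) = 0\<close> by blast
    ultimately show ?thesis using linear_diff[OF linT, of zp z] by simp
  qed
  define \<Gamma>0 where "\<Gamma>0 = {(Q x, T x) | x. True}"
  have "\<Gamma>0 \<in> ext_set p \<nu>"
    unfolding ext_set_def
  proof (intro CollectI conjI allI impI)
    fix x a b assume "(x,a)\<in>\<Gamma>0" "(x,b)\<in>\<Gamma>0"
    then obtain y1 y2 where "x = Q y1" "a = T y1" "x = Q y2" "b = T y2" unfolding \<Gamma>0_def by blast
    then show "a = b" using wd[of "y1 - y2"] linear_diff[OF linQ] linear_diff[OF linT] by simp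
  next
    have "(Q 0, T 0) \<in> \<Gamma>0" unfolding \<Gamma>0_def by blast
    then show "(0,0) \<in> \<Gamma>0" using linear_0[OF linQ] linear_0[OF linT] by simp
  next
    fix x a y b assume "(x,a)\<in>\<Gamma>0" "(y,b)\<in>\<Gamma>0"
    then obtain y1 y2 where "x = Q y1" "a = T y1" "y = Q y2" "b = T y2" unfolding \<Gamma>0_def by blast
    moreover have "(Q (y1 + y2), T (y1 + y2)) \<in> \<Gamma>0" unfolding \<Gamma>0_def by blast
    ultimately show "(x+y,a+b)\<in>\<Gamma>0" using linear_add[OF linQ] linear_add[OF linT] by simp
  next
    fix x a and r :: real assume "(x,a)\<in>\<Gamma>0"
    then obtain y1 where "x = Q y1" "a = T y1" unfolding \<Gamma>0_def by blast
    moreover have "(Q (r *\<^sub>R y1), T (r *\<^sub>R y1)) \<in> \<Gamma>0" unfolding \<Gamma>0_def by blast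
    ultimately show "(r *\<^sub>R x, r *\<^sub>R a)\<in>\<Gamma>0" using linear_scale[OF linQ] linear_scale[OF linT] by simp
  next
    fix h a assume "(h,a)\<in>\<Gamma>0"
    then obtain x where e: "h = Q x" "a = T x" unfolding \<Gamma>0_def by blast
    define xp where "xp = fjoin \<mu> x 0"
    have b: "fle \<mu> 0 xp" "fle \<mu> 0 (xp - x)"
    proof -
      have j: "fle \<mu> x xp" "fle \<mu> 0 xp" using jE[of x] unfolding is_fsup_def xp_def by simp_all
      show "fle \<mu> 0 xp" "fle \<mu> 0 (xp - x)" using j ovs.diff[OF ovE, of x xp] by simp_all
    qed
    have "fle \<nu> 0 ((S (Q xp) - T xp) + T (xp - x))"
      using ovs.pos_add[OF ovF TSQ[OF b(1)] Tpos[OF b(2)]] .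
    then have "fle \<nu> 0 (S (Q xp) - T x)" using linear_diff[OF linT] by simp
    then have "fle \<nu> (T x) (S (Q xp))" using ovs.diff[OF ovF] by blast
    then show "fle \<nu> a (p h)" using e Qp unfolding p_def xp_def by simp
  qed
  from HB[OF ovF dc sub hom this] obtain R where R: "linear R" "\<And>x. fle \<nu> (R x) (p x)"
    "\<And>x a. (x,a)\<in>\<Gamma>0 \<Longrightarrow> R x = a" by blast
  have "T = R \<circ> Q"
  proof
    fix x have "(Q x, T x) \<in> \<Gamma>0" unfolding \<Gamma>0_def by blast
    then show "T x = (R \<circ> Q) x" using R(3) by simp
  qed
  moreover have "fuzzy_positive \<omega> \<nu> R"
    unfolding fuzzy_positive_def
  proof (intro allI impI)
    fix h assume h: "fle \<omega> 0 h"
    have "fle \<omega> (-h) 0" using h ovs.diff[OF ovH, of "-h" 0] by simp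
    then have "is_fsup \<omega> {-h, 0} 0" unfolding is_fsup_def using ovs.refl[OF ovH, of 0] by blast
    then have "fjoin \<omega> (-h) 0 = 0" by (rule fjoin_eq[OF ovH])
    then have "fle \<nu> (R (-h)) 0" using R(2)[of "-h"] linear_0[OF linS] unfolding p_def by simp
    then have "fle \<nu> (- R h) 0" using linear_neg[OF R(1), of h] by simp
    then show "fle \<nu> 0 (R h)" using ovs.neg_pos[OF ovF, of "- R h"] by simp
  qed
  moreover have "op_fle \<omega> \<nu> R S"
    unfolding op_fle_def fuzzy_positive_def
  proof (intro allI impI)
    fix h assume h: "fle \<omega> 0 h"
    then have "is_fsup \<omega> {h, 0} h" unfolding is_fsup_def using ovs.refl[OF ovH, of h] by blast
    then have "fjoin \<omega> h 0 = h" by (rule fjoin_eq[OF ovH])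
    then have "fle \<nu> (R h) (S h)" using R(2)[of h] unfolding p_def by simp
    then show "fle \<nu> 0 (S h - R h)" using ovs.diff[OF ovF] by blast
  qed
  ultimately show ?thesis using R(1) by blast
qed

end
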